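(* Let $(\Omega,\mathcal{H},\mathbb{E})$ be a nonlinear expectation space and let $\{X_\alpha\}_{\alpha\in\mathcal{A}}$ be a family of $\mathbb{R}^d$-valued random variables on it (so $\varphi(X_\alpha)\in\mathcal{H}$ for $\varphi\in C_b(\mathbb{R}^d)$). Let $(\bar\Omega,\bar{\mathcal{H}},\bar{\mathbb{E}})$ be a sublinear expectation space, $l>0$ fixed, and $\bar X=(\bar X_1,\dots,\bar X_d)$ with $\bar X_i\in\bar{\mathcal{H}}$ and $\psi(\bar X)\in\bar{\mathcal{H}}$ for every Borel $\psi:\mathbb{R}^d\to\mathbb{R}$ with $|\psi(x)|\le c(1+|x|^l)$. Suppose \[ \mathbb{E}[\varphi(X_\alpha)]-\mathbb{E}[\psi(X_\alpha)]\le\bar{\mathbb{E}}[\varphi(\bar X)-\psi(\bar X)]\quad\text{for all }\alpha\in\mathcal{A},\ \varphi,\psi\in C_b(\mathbb{R}^d). \] Then the family of distributions $\{\mathbb{F}_{X_\alpha}\}_{\alpha\in\mathcal{A}}$, $\mathbb{F}_{X_\alpha}[\varphi]:=\mathbb{E}[\varphi(X_\alpha)]$ for $\varphi\in C_b(\mathbb{R}^d)$, is weakly compact: every sequence $\{\mathbb{F}_{X_{\alpha_n}}\}_{n\ge1}$ has a subsequence $\{\mathbb{F}_{X_{\alpha_{n_i}}}\}_{i\ge1}$ such that $\{\mathbb{F}_{X_{\alpha_{n_i}}}[\varphi]\}_{i\ge1}$ is Cauchy for every $\varphi\in C_b(\mathbb{R}^d)$.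
   Context: A nonlinear expectation space $(\Omega,\mathcal{H},\mathbb{E})$: $\mathcal{H}$ is a linear space of real functions on a set $\Omega$ with $1\in\mathcal{H}$ and $|\xi|\in\mathcal{H}$ for $\xi\in\mathcal{H}$; $\mathbb{E}:\mathcal{H}\to\mathbb{R}$ satisfies $\mathbb{E}[c]=c$ for constants and $\mathbb{E}[X]\ge\mathbb{E}[Y]$ when $X\ge Y$. A sublinear expectation space is such a space where moreover $\mathbb{E}[X+Y]\le\mathbb{E}[X]+\mathbb{E}[Y]$ and $\mathbb{E}[\lambda X]=\lambda\mathbb{E}[X]$ for $\lambda\ge0$. $C_b(\mathbb{R}^d)$ denotes bounded continuous real functions on $\mathbb{R}^d$. *)

theory Defs
  imports "HOL-Analysis.Analysis"
begin

text \<open>Omega is modelled as the (nonempty) universe of a type 'w; random variables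
  are real functions on it.  H is a set of such functions, E a functional on them.\<close>

definition nonlinear_expectation_space :: "('w \<Rightarrow> real) set \<Rightarrow> (('w \<Rightarrow> real) \<Rightarrow> real) \<Rightarrow> bool" where
  "nonlinear_expectation_space H E \<longleftrightarrow>
     (\<forall>X\<in>H. \<forall>Y\<in>H. (\<lambda>\<omega>. X \<omega> + Y \<omega>) \<in> H) \<and>
     (\<forall>X\<in>H. \<forall>a::real. (\<lambda>\<omega>. a * X \<omega>) \<in> H) \<and>
     (\<lambda>\<omega>. 1) \<in> H \<and>
     (\<forall>X\<in>H. (\<lambda>\<omega>. \<bar>X \<omega>\<bar>) \<in> H) \<and>
     (\<forall>c::real. E (\<lambda>\<omega>. c) = c) \<and>
     (\<forall>X\<in>H. \<forall>Y\<in>H. (\<forall>\<omega>. X \<omega> \<ge> Y \<omega>) \<longrightarrow> E X \<ge> E Y)"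

definition sublinear_expectation_space :: "('w \<Rightarrow> real) set \<Rightarrow> (('w \<Rightarrow> real) \<Rightarrow> real) \<Rightarrow> bool" where
  "sublinear_expectation_space H E \<longleftrightarrow>
     nonlinear_expectation_space H E \<and>
     (\<forall>X\<in>H. \<forall>Y\<in>H. E (\<lambda>\<omega>. X \<omega> + Y \<omega>) \<le> E X + E Y) \<and>
     (\<forall>X\<in>H. \<forall>t::real. t \<ge> 0 \<longrightarrow> E (\<lambda>\<omega>. t * X \<omega>) = t * E X)"

definition Cb :: "(real^'n \<Rightarrow> real) set" where
  "Cb = {\<phi>. continuous_on UNIV \<phi> \<and> bounded (range \<phi>)}"

end

theory Submission
  imports Defs "HOL-Library.Countable" "HOL-Library.Diagonal_Subsequence"
begin

datatype 'n pexp = PC rat | PV 'n | PA "'n pexp" "'n pexp" | PM "'n pexp" "'n pexp"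
instance pexp :: (countable) countable by countable_datatype
primrec peval :: "'n pexp \<Rightarrow> real^'n \<Rightarrow> real" where
 "peval (PC q) x = of_rat q" | "peval (PV i) x = x $ i" |
 "peval (PA a b) x = peval a x + peval b x" | "peval (PM a b) x = peval a x * peval b x"

lemma peval_cont: "continuous_on UNIV (peval p)"
  by (induction p) (auto intro!: continuous_intros simp: continuous_on_const)

definition approxable :: "(real^'n) set \<Rightarrow> (real^'n \<Rightarrow> real) set" where
 "approxable S = {f. continuous_on S f \<and> (\<forall>e>0. \<exists>p. \<forall>x\<in>S. \<bar>f x - peval p x\<bar> < e)}"

lemma approxable_ring:
  fixes S :: "(real^'n) set"
  assumes S: "compact S"
  shows "function_ring_on (approxable S) S"
proof
  show "compact S" by fact
next
  fix f assume "f \<in> approxable S" thus "continuous_on S f" by (simp add: approxable_def)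
next
  fix f g assume f: "f \<in> approxable S" and g: "g \<in> approxable S"
  show "(\<lambda>x. f x + g x) \<in> approxable S"
    unfolding approxable_def
  proof (intro CollectI conjI allI impI)
    show "continuous_on S (\<lambda>x. f x + g x)" using f g by (auto simp: approxable_def intro!: continuous_intros)
    fix e :: real assume e: "e > 0"
    have e2: "e/2 > 0" using e by simp
    obtain p where p: "\<forall>x\<in>S. \<bar>f x - peval p x\<bar> < e/2" using f e2 unfolding approxable_def by blast
    obtain q where q: "\<forall>x\<in>S. \<bar>g x - peval q x\<bar> < e/2" using g e2 unfolding approxable_def by blast
    show "\<exists>p. \<forall>x\<in>S. \<bar>f x + g x - peval p x\<bar> < e"
      proof (rule exI[of _ "PA p q"], intro ballI)
        fix x assume "x \<in> S"
        hence "\<bar>f x - peval p x\<bar> < e/2" "\<bar>g x - peval q x\<bar> < e/2" using p q by auto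
        thus "\<bar>f x + g x - peval (PA p q) x\<bar> < e" unfolding peval.simps by arith
      qed
  qed
next
  fix f g assume f: "f \<in> approxable S" and g: "g \<in> approxable S"
  show "(\<lambda>x. f x * g x) \<in> approxable S"
    unfolding approxable_def
  proof (intro CollectI conjI allI impI)
    have cf: "continuous_on S f" and cg: "continuous_on S g" using f g by (auto simp: approxable_def)
    thus "continuous_on S (\<lambda>x. f x * g x)" by (auto intro!: continuous_intros)
    have "bounded (f ` S)" by (rule compact_imp_bounded[OF compact_continuous_image[OF cf S]])
    then obtain Bf where "\<forall>y\<in>f ` S. norm y \<le> Bf" unfolding bounded_iff by blast
    hence Bf: "\<forall>x\<in>S. \<bar>f x\<bar> \<le> Bf" by simp
    have "bounded (g ` S)" by (rule compact_imp_bounded[OF compact_continuous_image[OF cg S]])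
    then obtain Bg where "\<forall>y\<in>g ` S. norm y \<le> Bg" unfolding bounded_iff by blast
    hence Bg: "\<forall>x\<in>S. \<bar>g x\<bar> \<le> Bg" by simp
    fix e :: real assume e: "e > 0"
    define B where "B = \<bar>Bf\<bar> + \<bar>Bg\<bar> + 1"
    have B: "B > 0" by (simp add: B_def add_pos_nonneg)
    define d where "d = min 1 (e / (2*B))"
    have d1: "d > 0" using e B by (simp add: d_def)
    have d2: "d \<le> 1" by (simp add: d_def)
    have "d \<le> e / (2*B)" by (simp add: d_def)
    hence "d * B \<le> e / (2*B) * B" using B by (intro mult_right_mono) auto
    also have "\<dots> = e/2" using B by simp
    finally have d3: "d * B < e" using e by linarith
    note d = d1 d2 d3
    obtain p where p: "\<forall>x\<in>S. \<bar>f x - peval p x\<bar> < d" using f d(1) unfolding approxable_def by blast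
    obtain q where q: "\<forall>x\<in>S. \<bar>g x - peval q x\<bar> < d" using g d(1) unfolding approxable_def by blast
    show "\<exists>p. \<forall>x\<in>S. \<bar>f x * g x - peval p x\<bar> < e"
    proof (rule exI[of _ "PM p q"], intro ballI)
      fix x assume x: "x \<in> S"
      have "\<bar>g x - peval q x\<bar> < d" "\<bar>g x\<bar> \<le> Bg" using q x Bg by auto
      hence q1: "\<bar>peval q x\<bar> \<le> \<bar>Bg\<bar> + 1" using d(2) by arith
      have "f x * g x - peval (PM p q) x = f x * (g x - peval q x) + (f x - peval p x) * peval q x"
        by (simp add: algebra_simps)
      hence "\<bar>f x * g x - peval (PM p q) x\<bar> \<le> \<bar>f x\<bar> * \<bar>g x - peval q x\<bar> + \<bar>f x - peval p x\<bar> * \<bar>peval q x\<bar>"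
        by (metis abs_mult abs_triangle_ineq)
      also have "\<dots> \<le> \<bar>Bf\<bar> * d + d * (\<bar>Bg\<bar> + 1)"
        by (intro add_mono mult_mono) (use p q x Bf q1 in auto)
      also have "\<dots> = d * B" by (simp add: B_def algebra_simps)
      also have "\<dots> < e" using d by auto
      finally show "\<bar>f x * g x - peval (PM p q) x\<bar> < e" .
    qed
  qed
next
  fix c :: real
  show "(\<lambda>_. c) \<in> approxable S"
    unfolding approxable_def
  proof (intro CollectI conjI allI impI)
    show "continuous_on S (\<lambda>_. c)" by (simp add: continuous_on_const)
    fix e :: real assume e: "e > 0"
    obtain r where r: "r \<in> \<rat>" "c - e < r" "r < c + e" using Rats_dense_in_real[of "c - e" "c + e"] e by auto
    then obtain q where "r = of_rat q" by (auto elim: Rats_cases)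
    thus "\<exists>p. \<forall>x\<in>S. \<bar>c - peval p x\<bar> < e"
      using r by (intro exI[of _ "PC q"]) auto
  qed
next
  fix x y :: "real^'n" assume "x \<noteq> y"
  then obtain i where i: "x $ i \<noteq> y $ i" by (auto simp: vec_eq_iff)
  have "(\<lambda>z. z $ i) \<in> approxable S"
    unfolding approxable_def
  proof (intro CollectI conjI allI impI)
    show "continuous_on S (\<lambda>z. z $ i)" by (rule continuous_on_component[OF continuous_on_id])
    fix e :: real assume "e > 0"
    thus "\<exists>p. \<forall>x\<in>S. \<bar>x $ i - peval p x\<bar> < e" by (intro exI[of _ "PV i"]) simp
  qed
  thus "\<exists>f\<in>approxable S. f x \<noteq> f y" using i by (intro bexI[of _ "\<lambda>z. z $ i"])
qed

lemma peval_approx: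
  fixes f :: "real^'n \<Rightarrow> real"
  assumes "compact S" "continuous_on S f" "e > 0"
  shows "\<exists>p. \<forall>x\<in>S. \<bar>f x - peval p x\<bar> < e"
proof -
  interpret function_ring_on "approxable S" S by (rule approxable_ring[OF assms(1)])
  obtain g where g: "g \<in> approxable S" "\<forall>x\<in>S. \<bar>f x - g x\<bar> < e/2"
    using Stone_Weierstrass_basic[OF assms(2), of "e/2"] assms(3) by auto
  have e2: "e/2 > 0" using assms(3) by simp
  obtain p where p: "\<forall>x\<in>S. \<bar>g x - peval p x\<bar> < e/2" using g(1) e2 unfolding approxable_def by blast
  show ?thesis
  proof (rule exI[of _ p], intro ballI)
    fix x assume "x \<in> S"
    hence "\<bar>f x - g x\<bar> < e/2" "\<bar>g x - peval p x\<bar> < e/2" using g p by auto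
    thus "\<bar>f x - peval p x\<bar> < e" by arith
  qed
qed
lemma clamp_le:
  fixes a q m :: real
  assumes "\<bar>a\<bar> \<le> m"
  shows "\<bar>a - max (-m) (min m q)\<bar> \<le> \<bar>a - q\<bar>" "\<bar>a - max (-m) (min m q)\<bar> \<le> 2*m"
  using assms by arith+

lemma Cb_bound: "\<phi> \<in> Cb \<Longrightarrow> \<exists>B. \<forall>x. \<bar>\<phi> x\<bar> \<le> B"
  unfolding Cb_def bounded_iff by auto

lemma Cb_clamp: "(\<lambda>x. max (-real m) (min (real m) (peval p x))) \<in> Cb"
proof -
  have "continuous_on UNIV (\<lambda>x. max (-real m) (min (real m) (peval p x)))"
    by (intro continuous_intros peval_cont[THEN continuous_on_subset]) auto
  moreover have "bounded (range (\<lambda>x. max (-real m) (min (real m) (peval p x))))"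
    unfolding bounded_iff by (intro exI[of _ "real m"]) auto
  ultimately show ?thesis by (simp add: Cb_def)
qed

lemma Cb_borel: "\<phi> \<in> Cb \<Longrightarrow> \<phi> \<in> borel_measurable borel"
  unfolding Cb_def by (auto intro: borel_measurable_continuous_onI)

lemma Cb_dense:
  fixes \<phi> :: "real^'n \<Rightarrow> real" and K l e :: real
  assumes "\<phi> \<in> Cb" "K \<ge> 0" "l > 0" "e > 0"
  shows "\<exists>m p c. c \<ge> 0 \<and> c * K \<le> e/2 \<and>
     (\<forall>x. \<bar>\<phi> x - max (-real m) (min (real m) (peval p x))\<bar> \<le> e/2 + c * norm x powr l)"
proof -
  obtain B where B: "\<forall>x. \<bar>\<phi> x\<bar> \<le> B" using Cb_bound[OF assms(1)] by auto
  obtain m :: nat where m: "B \<le> real m" using real_nat_ceiling_ge by blast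
  define T where "T = 4 * real m * K / e + 1"
  have T: "T \<ge> 1" using assms by (simp add: T_def)
  define N where "N = T powr (1/l)"
  have N: "N > 0" using T by (simp add: N_def)
  have NT: "N powr l = T" using T assms(3) by (simp add: N_def powr_powr)
  define c where "c = 2 * real m / T"
  have c0: "c \<ge> 0" using T by (simp add: c_def)
  have "c * K = 2 * real m * K / T" by (simp add: c_def)
  also have "\<dots> \<le> e/2"
  proof -
    have "2 * real m * K \<le> e/2 * T" using assms by (simp add: T_def field_simps)
    thus ?thesis using T by (simp add: divide_le_eq)
  qed
  finally have cK: "c * K \<le> e/2" .
  have cont: "continuous_on (cball 0 N) \<phi>"
    using assms(1) by (auto simp: Cb_def intro: continuous_on_subset)
  obtain p where p: "\<forall>x\<in>cball 0 N. \<bar>\<phi> x - peval p x\<bar> < e/2"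
    using peval_approx[OF compact_cball cont, of "e/2"] assms by auto
  have "\<forall>x. \<bar>\<phi> x - max (-real m) (min (real m) (peval p x))\<bar> \<le> e/2 + c * norm x powr l"
  proof
    fix x :: "real^'n"
    have bm: "\<bar>\<phi> x\<bar> \<le> real m" using B m by (meson order_trans)
    have pos: "c * norm x powr l \<ge> 0" using c0 by simp
    show "\<bar>\<phi> x - max (-real m) (min (real m) (peval p x))\<bar> \<le> e/2 + c * norm x powr l"
    proof (cases "norm x \<le> N")
      case True
      hence "\<bar>\<phi> x - peval p x\<bar> < e/2" using p by auto
      thus ?thesis using clamp_le(1)[OF bm, of "peval p x"] pos by linarith
    next
      case False
      hence "N powr l \<le> norm x powr l" using N assms(3) by (intro powr_mono2) auto
      hence "c * T \<le> c * norm x powr l" using NT c0 by (simp add: mult_left_mono)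
      moreover have "c * T = 2 * real m" using T by (simp add: c_def)
      ultimately show ?thesis using clamp_le(2)[OF bm, of "peval p x"] assms(4) by linarith
    qed
  qed
  thus ?thesis using c0 cK by blast
qed

theorem mainTheorem2:
  fixes H :: "('w \<Rightarrow> real) set" and E :: "('w \<Rightarrow> real) \<Rightarrow> real"
    and X :: "'i \<Rightarrow> 'w \<Rightarrow> real^'n"
    and Hb :: "('v \<Rightarrow> real) set" and Eb :: "('v \<Rightarrow> real) \<Rightarrow> real"
    and Xb :: "'v \<Rightarrow> real^'n"
    and l :: real
  assumes "nonlinear_expectation_space H E"
    and "\<And>\<alpha> \<phi>. \<phi> \<in> Cb \<Longrightarrow> (\<lambda>\<omega>. \<phi> (X \<alpha> \<omega>)) \<in> H"
    and "sublinear_expectation_space Hb Eb"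
    and "l > 0"
    and "\<And>i. (\<lambda>\<omega>. Xb \<omega> $ i) \<in> Hb"
    and "\<And>\<psi> c. \<psi> \<in> borel_measurable borel \<Longrightarrow>
           (\<forall>x. \<bar>\<psi> x\<bar> \<le> c * (1 + norm x powr l)) \<Longrightarrow> (\<lambda>\<omega>. \<psi> (Xb \<omega>)) \<in> Hb"
    and "\<And>\<alpha> \<phi> \<psi>. \<phi> \<in> Cb \<Longrightarrow> \<psi> \<in> Cb \<Longrightarrow>
           E (\<lambda>\<omega>. \<phi> (X \<alpha> \<omega>)) - E (\<lambda>\<omega>. \<psi> (X \<alpha> \<omega>))
             \<le> Eb (\<lambda>\<omega>. \<phi> (Xb \<omega>) - \<psi> (Xb \<omega>))"
  shows "\<forall>a :: nat \<Rightarrow> 'i. \<exists>r :: nat \<Rightarrow> nat. strict_mono r \<and>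
           (\<forall>\<phi>\<in>Cb. Cauchy (\<lambda>k. E (\<lambda>\<omega>. \<phi> (X (a (r k)) \<omega>))))"
proof
  fix a :: "nat \<Rightarrow> 'i"
  have Hs: "\<forall>Y\<in>H. \<forall>c::real. (\<lambda>\<omega>. c * Y \<omega>) \<in> H" and H1: "(\<lambda>\<omega>. 1) \<in> H"
    and Ec: "\<forall>c::real. E (\<lambda>\<omega>. c) = c"
    and Em: "\<forall>Y\<in>H. \<forall>Z\<in>H. (\<forall>\<omega>. Y \<omega> \<ge> Z \<omega>) \<longrightarrow> E Y \<ge> E Z"
    using assms(1) unfolding nonlinear_expectation_space_def by auto
  have Hbs: "\<forall>Y\<in>Hb. \<forall>c::real. (\<lambda>\<omega>. c * Y \<omega>) \<in> Hb"
    and Hba: "\<forall>Y\<in>Hb. \<forall>Z\<in>Hb. (\<lambda>\<omega>. Y \<omega> + Z \<omega>) \<in> Hb"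
    and Ebc: "\<forall>c::real. Eb (\<lambda>\<omega>. c) = c"
    and Ebm: "\<forall>Y\<in>Hb. \<forall>Z\<in>Hb. (\<forall>\<omega>. Y \<omega> \<ge> Z \<omega>) \<longrightarrow> Eb Y \<ge> Eb Z"
    and Ebsub: "\<forall>Y\<in>Hb. \<forall>Z\<in>Hb. Eb (\<lambda>\<omega>. Y \<omega> + Z \<omega>) \<le> Eb Y + Eb Z"
    and Ebh: "\<forall>Y\<in>Hb. \<forall>t::real. t \<ge> 0 \<longrightarrow> Eb (\<lambda>\<omega>. t * Y \<omega>) = t * Eb Y"
    using assms(3) unfolding sublinear_expectation_space_def nonlinear_expectation_space_def by auto
  have Hconst: "(\<lambda>\<omega>. c) \<in> H" for c
    using Hs H1 by force
  have Emono: "E (\<lambda>\<omega>. \<phi> (X \<alpha> \<omega>)) \<le> c" if "\<phi> \<in> Cb" "\<forall>x. \<phi> x \<le> c" for \<phi> \<alpha> c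
  proof -
    have "E (\<lambda>\<omega>. \<phi> (X \<alpha> \<omega>)) \<le> E (\<lambda>\<omega>. c)"
      using Em Hconst[of c] assms(2)[OF that(1)] that(2) by simp
    thus ?thesis using Ec by simp
  qed
  have Emono2: "E (\<lambda>\<omega>. \<phi> (X \<alpha> \<omega>)) \<ge> c" if "\<phi> \<in> Cb" "\<forall>x. \<phi> x \<ge> c" for \<phi> \<alpha> c
  proof -
    have "E (\<lambda>\<omega>. \<phi> (X \<alpha> \<omega>)) \<ge> E (\<lambda>\<omega>. c)"
      using Em Hconst[of c] assms(2)[OF that(1)] that(2) by simp
    thus ?thesis using Ec by simp
  qed
  have Ebound: "\<bar>E (\<lambda>\<omega>. \<phi> (X \<alpha> \<omega>))\<bar> \<le> B" if "\<phi> \<in> Cb" "\<forall>x. \<bar>\<phi> x\<bar> \<le> B" for \<phi> \<alpha> B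
  proof -
    have "\<forall>x. \<phi> x \<le> B" "\<forall>x. \<phi> x \<ge> -B"
      using that(2) by (intro allI, metis abs_le_D1, metis abs_le_D2 minus_le_iff)+
    hence "E (\<lambda>\<omega>. \<phi> (X \<alpha> \<omega>)) \<le> B" "-B \<le> E (\<lambda>\<omega>. \<phi> (X \<alpha> \<omega>))"
      using Emono[OF that(1), of B \<alpha>] Emono2[OF that(1), of "-B" \<alpha>] by auto
    thus ?thesis by linarith
  qed
  define g where "g = (\<lambda>\<omega>. norm (Xb \<omega>) powr l)"
  define K where "K = Eb g"
  have powr_meas: "(\<lambda>x::real^'n. norm x powr l) \<in> borel_measurable borel" by measurable
  have g_in: "g \<in> Hb" unfolding g_def
    by (rule assms(6)[OF powr_meas, of 1]) auto
  have const_in: "(\<lambda>\<omega>. c) \<in> Hb" for c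
    by (rule assms(6)[of "\<lambda>_. c" "\<bar>c\<bar>", simplified]) (auto intro: mult_le_cancel_left1[THEN iffD2])
  have K0: "K \<ge> 0"
  proof -
    have "Eb (\<lambda>\<omega>. 0) \<le> Eb g" using Ebm const_in[of 0] g_in by (simp add: g_def)
    thus ?thesis using Ebc by (simp add: K_def)
  qed
  have keyB: "E (\<lambda>\<omega>. \<phi> (X \<alpha> \<omega>)) - E (\<lambda>\<omega>. \<psi> (X \<alpha> \<omega>)) \<le> \<epsilon> + c * K"
    if hB: "\<phi> \<in> Cb" "\<psi> \<in> Cb" "\<epsilon> \<ge> 0" "c \<ge> 0" "\<forall>x. \<bar>\<phi> x - \<psi> x\<bar> \<le> \<epsilon> + c * norm x powr l"
    for \<phi> \<psi> \<alpha> \<epsilon> c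
  proof -
    obtain B1 where B1: "\<forall>x. \<bar>\<phi> x\<bar> \<le> B1" using Cb_bound[OF hB(1)] by auto
    obtain B2 where B2: "\<forall>x. \<bar>\<psi> x\<bar> \<le> B2" using Cb_bound[OF hB(2)] by auto
    have d_in: "(\<lambda>\<omega>. \<phi> (Xb \<omega>) - \<psi> (Xb \<omega>)) \<in> Hb"
    proof (rule assms(6)[of "\<lambda>x. \<phi> x - \<psi> x" "B1 + B2", simplified])
      show "(\<lambda>x. \<phi> x - \<psi> x) \<in> borel_measurable borel"
        using Cb_borel[OF hB(1)] Cb_borel[OF hB(2)] by measurable
      show "\<forall>x. \<bar>\<phi> x - \<psi> x\<bar> \<le> (B1 + B2) * (1 + norm x powr l)"
      proof
        fix x :: "real^'n"
        have "\<bar>\<phi> x - \<psi> x\<bar> \<le> B1 + B2" using B1[rule_format, of x] B2[rule_format, of x] by arith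
        have b0: "0 \<le> B1 + B2" using B1[rule_format, of x] B2[rule_format, of x] by arith
        have "(B1 + B2) * (norm x powr l) \<ge> 0" using b0 by simp
        hence "B1 + B2 \<le> (B1 + B2) * (1 + norm x powr l)" by (simp add: distrib_left)
        note \<open>\<bar>\<phi> x - \<psi> x\<bar> \<le> B1 + B2\<close>
        also note \<open>B1 + B2 \<le> (B1 + B2) * (1 + norm x powr l)\<close>
        finally show "\<bar>\<phi> x - \<psi> x\<bar> \<le> (B1 + B2) * (1 + norm x powr l)" .
      qed
    qed
    have cg_in: "(\<lambda>\<omega>. c * g \<omega>) \<in> Hb" using Hbs g_in by simp
    have s_in: "(\<lambda>\<omega>. \<epsilon> + c * g \<omega>) \<in> Hb" using Hba cg_in const_in[of \<epsilon>] by simp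
    have "E (\<lambda>\<omega>. \<phi> (X \<alpha> \<omega>)) - E (\<lambda>\<omega>. \<psi> (X \<alpha> \<omega>)) \<le> Eb (\<lambda>\<omega>. \<phi> (Xb \<omega>) - \<psi> (Xb \<omega>))"
      by (rule assms(7)[OF hB(1,2)])
    also have "\<dots> \<le> Eb (\<lambda>\<omega>. \<epsilon> + c * g \<omega>)"
    proof -
      have "\<forall>\<omega>. \<phi> (Xb \<omega>) - \<psi> (Xb \<omega>) \<le> \<epsilon> + c * g \<omega>"
        using hB(5) unfolding g_def by (meson abs_le_D1)
      thus ?thesis using Ebm d_in s_in by simp
    qed
    also have "\<dots> \<le> Eb (\<lambda>\<omega>. \<epsilon>) + Eb (\<lambda>\<omega>. c * g \<omega>)"
      using Ebsub const_in[of \<epsilon>] cg_in by simp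
    also have "\<dots> = \<epsilon> + c * K" using Ebc Ebh g_in hB(4) by (simp add: K_def)
    finally show ?thesis .
  qed
  have keyAbs: "\<bar>E (\<lambda>\<omega>. \<phi> (X \<alpha> \<omega>)) - E (\<lambda>\<omega>. \<psi> (X \<alpha> \<omega>))\<bar> \<le> \<epsilon> + c * K"
    if hA: "\<phi> \<in> Cb" "\<psi> \<in> Cb" "\<epsilon> \<ge> 0" "c \<ge> 0" "\<forall>x. \<bar>\<phi> x - \<psi> x\<bar> \<le> \<epsilon> + c * norm x powr l"
    for \<phi> \<psi> \<alpha> \<epsilon> c
  proof -
    have "\<forall>x. \<bar>\<psi> x - \<phi> x\<bar> \<le> \<epsilon> + c * norm x powr l" using hA(5) by (simp add: abs_minus_commute)
    from keyB[OF hA, of \<alpha>] keyB[OF hA(2,1,3,4) this, of \<alpha>] show ?thesis by linarith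
  qed
  define cl where "cl = (\<lambda>(p::'n pexp, m::nat). \<lambda>x. max (-real m) (min (real m) (peval p x)))"
  define D where "D = range cl"
  have D_Cb: "D \<subseteq> Cb" unfolding D_def cl_def using Cb_clamp by auto
  have cD: "countable D" unfolding D_def by simp
  have neD: "D \<noteq> {}" unfolding D_def by simp
  define d where "d = from_nat_into D"
  have rd: "range d = D" unfolding d_def using range_from_nat_into[OF neD cD] .
  have dCb: "d j \<in> Cb" for j using rd D_Cb by auto
  have dense: "\<exists>j. \<forall>\<alpha>. \<bar>E (\<lambda>\<omega>. \<phi> (X \<alpha> \<omega>)) - E (\<lambda>\<omega>. d j (X \<alpha> \<omega>))\<bar> \<le> e"
    if hD: "\<phi> \<in> Cb" "e > 0" for \<phi> e
  proof -
    obtain m p c where mpc: "c \<ge> 0" "c * K \<le> e/2"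
      "\<forall>x. \<bar>\<phi> x - max (-real m) (min (real m) (peval p x))\<bar> \<le> e/2 + c * norm x powr l"
      using Cb_dense[OF hD(1) K0 assms(4) hD(2)] by blast
    have "cl (p, m) \<in> D" by (simp add: D_def)
    then obtain j where j: "d j = cl (p, m)" using rd by (metis imageE)
    have "\<forall>x. \<bar>\<phi> x - d j x\<bar> \<le> e/2 + c * norm x powr l" using mpc(3) by (simp add: j cl_def)
    hence "\<bar>E (\<lambda>\<omega>. \<phi> (X \<alpha> \<omega>)) - E (\<lambda>\<omega>. d j (X \<alpha> \<omega>))\<bar> \<le> e" for \<alpha>
    proof -
      have "e/2 \<ge> 0" using hD(2) by simp
      from keyAbs[OF hD(1) dCb[of j] this mpc(1) \<open>\<forall>x. \<bar>\<phi> x - d j x\<bar> \<le> e/2 + c * norm x powr l\<close>, of \<alpha>]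
      show ?thesis using mpc(2) by linarith
    qed
    thus ?thesis by blast
  qed
  define u where "u = (\<lambda>j k. E (\<lambda>\<omega>. d j (X (a k) \<omega>)))"
  have ubound: "\<exists>B. \<forall>k. \<bar>u j k\<bar> \<le> B" for j
  proof -
    obtain B where "\<forall>x. \<bar>d j x\<bar> \<le> B" using Cb_bound[OF dCb[of j]] by auto
    hence "\<forall>k. \<bar>u j k\<bar> \<le> B" unfolding u_def using Ebound[OF dCb[of j]] by simp
    thus ?thesis by (rule exI)
  qed
  interpret S: subseqs "\<lambda>j s. convergent (\<lambda>k. u j (s k))"
  proof
    fix j and s :: "nat \<Rightarrow> nat" assume "strict_mono s"
    obtain f where f: "strict_mono f" "monoseq (\<lambda>n. u j (s (f n)))" using seq_monosub[of "\<lambda>k. u j (s k)"] by blast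
    obtain B where B: "\<forall>k. \<bar>u j k\<bar> \<le> B" using ubound by blast
    have "Bseq (\<lambda>n. u j (s (f n)))" using B by (intro BseqI'[of _ B]) simp
    hence "convergent (\<lambda>n. u j (s (f n)))" using f(2) Bseq_monoseq_convergent by blast
    thus "\<exists>r'. strict_mono r' \<and> convergent (\<lambda>k. u j ((s \<circ> r') k))" using f(1)
      unfolding o_def by (intro exI[of _ f] conjI)
  qed
  define r where "r = S.diagseq"
  have rmono: "strict_mono r" unfolding r_def by (rule S.subseq_diagseq)
  have conv: "convergent (\<lambda>k. u j (r k))" for j
  proof -
    have "convergent (\<lambda>k. u j ((S.diagseq \<circ> (+) (Suc j)) k))"
    proof (rule S.diagseq_holds)
      fix r' s :: "nat \<Rightarrow> nat" and n assume "strict_mono r'" "convergent (\<lambda>k. u n (s k))"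
      then obtain L where "(\<lambda>k. u n (s k)) \<longlonglongrightarrow> L" by (auto simp: convergent_def)
      from LIMSEQ_subseq_LIMSEQ[OF this \<open>strict_mono r'\<close>]
      show "convergent (\<lambda>k. u n ((s \<circ> r') k))" by (auto simp: convergent_def o_def)
    qed
    then obtain L where "(\<lambda>k. u j (S.diagseq (k + Suc j))) \<longlonglongrightarrow> L"
      by (auto simp: convergent_def o_def add.commute)
    hence "(\<lambda>k. u j (S.diagseq k)) \<longlonglongrightarrow> L" by (rule LIMSEQ_offset)
    thus ?thesis by (auto simp: convergent_def r_def)
  qed
  show "\<exists>r :: nat \<Rightarrow> nat. strict_mono r \<and> (\<forall>\<phi>\<in>Cb. Cauchy (\<lambda>k. E (\<lambda>\<omega>. \<phi> (X (a (r k)) \<omega>))))"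
  proof (intro exI[of _ r] conjI ballI)
    show "strict_mono r" by (rule rmono)
    fix \<phi> :: "real^'n \<Rightarrow> real" assume phi: "\<phi> \<in> Cb"
    show "Cauchy (\<lambda>k. E (\<lambda>\<omega>. \<phi> (X (a (r k)) \<omega>)))"
    proof (rule metric_CauchyI)
      fix e :: real assume e: "0 < e"
      obtain j where j: "\<forall>\<alpha>. \<bar>E (\<lambda>\<omega>. \<phi> (X \<alpha> \<omega>)) - E (\<lambda>\<omega>. d j (X \<alpha> \<omega>))\<bar> \<le> e/4"
        using dense[OF phi, of "e/4"] e by auto
      have "Cauchy (\<lambda>k. u j (r k))" using conv[of j] by (rule convergent_Cauchy)
      then obtain M where M: "\<forall>m\<ge>M. \<forall>n\<ge>M. dist (u j (r m)) (u j (r n)) < e/4"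
        using metric_CauchyD[of _ "e/4"] e by (meson zero_less_divide_iff zero_less_numeral)
      show "\<exists>M. \<forall>m\<ge>M. \<forall>n\<ge>M. dist (E (\<lambda>\<omega>. \<phi> (X (a (r m)) \<omega>))) (E (\<lambda>\<omega>. \<phi> (X (a (r n)) \<omega>))) < e"
      proof (intro exI[of _ M] allI impI)
        fix m n assume "m \<ge> M" "n \<ge> M"
        hence "\<bar>u j (r m) - u j (r n)\<bar> < e/4" using M by (auto simp: dist_real_def)
        moreover have "\<bar>E (\<lambda>\<omega>. \<phi> (X (a (r m)) \<omega>)) - u j (r m)\<bar> \<le> e/4" using j by (simp add: u_def)
        moreover have "\<bar>E (\<lambda>\<omega>. \<phi> (X (a (r n)) \<omega>)) - u j (r n)\<bar> \<le> e/4" using j by (simp add: u_def)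
        ultimately show "dist (E (\<lambda>\<omega>. \<phi> (X (a (r m)) \<omega>))) (E (\<lambda>\<omega>. \<phi> (X (a (r n)) \<omega>))) < e"
          unfolding dist_real_def by linarith
      qed
    qed
  qed
qed

end
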